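(* Let $\alpha>0$, $\varepsilon>0$, and let $\delta_1$ satisfy $0<\delta_1<\big(2+\frac{1}{\alpha+\varepsilon}\big)^{-1}$. Put $s=\frac{\alpha+\varepsilon}{2(\alpha+\varepsilon)+1}+\delta_1$. Then there exists $N=N(\alpha,\varepsilon,\delta_1)\in\mathbb N$ such that for every $n\ge N$ and every $\mathbf b\in\mathbb N_{\ge2}^n$, \[ \sum_{c\in\mathbb N,\ c\ge R_n(\mathbf b)}|K_{n+1}(\mathbf b c)|^s\le|K_n(\mathbf b)|^s . \]
   Context: Lüroth digits: for $x\in(0,1]$, $a_1(x)=[1/x]+1$, $\mathcal L(x)=[1/x]([1/x]+1)x-[1/x]$, $a_{n+1}(x)=a_1(\mathcal L^n(x))$. Cylinders: for $\mathbf b=(b_1,\dots,b_n)\in\mathbb N_{\ge2}^n$, $\mathcal C_n(\mathbf b)=\{x\in(0,1]: a_j(x)=b_j,\ 1\le j\le n\}$; $\mathbf b c=(b_1,\dots,b_n,c)$. For $\mathbf b\in\mathbb N_{\ge2}^n$, $Q_n(\mathbf b)=b_n\prod_{j=1}^{n-1}b_j(b_j-1)$, $R_n(\mathbf b)=Q_n(\mathbf b)^{1/(\alpha+\varepsilon)}$, and $K_n(\mathbf b)=\mathrm{Cl}\big(\bigcup\{\mathcal C_{n+1}(\mathbf b b_{n+1}): b_{n+1}\in\mathbb N,\ b_{n+1}\ge R_n(\mathbf b)\}\big)$ (a compact interval); $|\cdot|$ denotes diameter. *)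

theory Defs
  imports "HOL-Analysis.Analysis"
begin

definition luroth_map :: "real \<Rightarrow> real" where
  "luroth_map x = (let k = real_of_int \<lfloor>1 / x\<rfloor> in k * (k + 1) * x - k)"

text \<open>Digits, 0-indexed: luroth_digit j x is the paper's a_(j+1)(x) = a_1(L^j(x)),
  where a_1(y) = [1/y] + 1.\<close>
definition luroth_digit :: "nat \<Rightarrow> real \<Rightarrow> nat" where
  "luroth_digit j x = nat \<lfloor>1 / ((luroth_map ^^ j) x)\<rfloor> + 1"

definition cylinder :: "nat list \<Rightarrow> real set" where
  "cylinder b = {x \<in> {0<..1}. \<forall>j < length b. luroth_digit j x = b ! j}"

definition Qn :: "nat list \<Rightarrow> real" where
  "Qn b = real (last b) * (\<Prod>j<length b - 1. real (b ! j) * (real (b ! j) - 1))"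

text \<open>R_n(b) = Q_n(b)^(1/t), with t = alpha + epsilon.\<close>
definition Rn :: "real \<Rightarrow> nat list \<Rightarrow> real" where
  "Rn t b = Qn b powr (1 / t)"

definition Kn :: "real \<Rightarrow> nat list \<Rightarrow> real set" where
  "Kn t b = closure (\<Union>c \<in> {c::nat. real c \<ge> Rn t b}. cylinder (b @ [c]))"

end

theory Submission
  imports Defs
begin


lemma digit_Suc: "luroth_digit (Suc j) x = luroth_digit j (luroth_map x)"
  unfolding luroth_digit_def funpow_Suc_right o_def by simp

lemma digit0: "luroth_digit 0 x = nat \<lfloor>1/x\<rfloor> + 1"
  unfolding luroth_digit_def by simp

definition phi :: "nat \<Rightarrow> real \<Rightarrow> real" where
  "phi d y = 1 / real d + y / (real d * (real d - 1))"

lemma phi_floor: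
  assumes d: "d \<ge> 2" and y: "0 < y" "y \<le> 1"
  shows "\<lfloor>1 / phi d y\<rfloor> = int d - 1" and "0 < phi d y" "phi d y \<le> 1"
    and "luroth_map (phi d y) = y"
proof -
  have dd: "real d * (real d - 1) > 0" using d by simp
  have pd: "phi d y = (real d - 1 + y) / (real d * (real d - 1))"
    unfolding phi_def using d by (simp add: field_simps)
  have pos: "phi d y > 0" using dd y d unfolding pd by simp
  have dpos: "real d - 1 + y > 0" using d y by simp
  have "1 / phi d y = real d * (real d - 1) / (real d - 1 + y)" unfolding pd by simp
  moreover have "real d * (real d - 1) / (real d - 1 + y) \<ge> real d - 1"
  proof -
    have "(real d - 1) * (real d - 1 + y) \<le> (real d - 1) * real d"
      by (rule mult_left_mono) (use d y in auto)
    then show ?thesis using dpos by (simp add: pos_le_divide_eq mult.commute)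
  qed
  moreover have "real d * (real d - 1) / (real d - 1 + y) < real d"
  proof -
    have "real d * (real d - 1) < real d * (real d - 1 + y)"
      by (rule mult_strict_left_mono) (use d y in auto)
    then show ?thesis using dpos by (simp add: pos_divide_less_eq)
  qed
  ultimately have fl: "\<lfloor>1 / phi d y\<rfloor> = int d - 1"
    by (simp add: floor_eq_iff)
  show "\<lfloor>1 / phi d y\<rfloor> = int d - 1" by (fact fl)
  show "0 < phi d y" by (fact pos)
  have "real d - 1 + y \<le> real d * (real d - 1)"
  proof -
    have "real d * 1 \<le> real d * (real d - 1)" by (rule mult_left_mono) (use d in auto)
    then show ?thesis using y by simp
  qed
  then show "phi d y \<le> 1" unfolding pd using dd by simp
  have "real_of_int \<lfloor>1 / phi d y\<rfloor> = real d - 1" using fl d by simp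
  then have "luroth_map (phi d y) = (real d - 1) * (real d - 1 + 1) * phi d y - (real d - 1)"
    unfolding luroth_map_def Let_def by simp
  also have "\<dots> = real d * (real d - 1) * ((real d - 1 + y) / (real d * (real d - 1))) - (real d - 1)"
    unfolding pd by (simp add: mult.commute)
  also have "\<dots> = y"
  proof -
    have g: "\<And>A B::real. A \<noteq> 0 \<Longrightarrow> A * (B / A) = B" by simp
    show ?thesis using g[of "real d * (real d - 1)" "real d - 1 + y"] dd by linarith
  qed
  finally show "luroth_map (phi d y) = y" .
qed

lemma cyl_cons:
  assumes d: "d \<ge> 2"
  shows "cylinder (d # w) = phi d ` cylinder w"
proof (intro set_eqI iffI)
  fix x assume x: "x \<in> cylinder (d # w)"
  then have x01: "0 < x" "x \<le> 1" and dg: "luroth_digit 0 x = d"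
    and rest: "\<forall>j<length w. luroth_digit (Suc j) x = w ! j"
    unfolding cylinder_def by auto
  define k where "k = \<lfloor>1/x\<rfloor>"
  have k1: "k \<ge> 1" unfolding k_def using x01 by (simp add: le_floor_iff)
  have kd: "k = int d - 1" using dg k1 unfolding digit0 k_def by auto
  have kle: "real_of_int k \<le> 1/x" "1/x < real_of_int k + 1" unfolding k_def by linarith+
  define y where "y = luroth_map x"
  have yv: "y = (real d - 1) * real d * x - (real d - 1)"
    unfolding y_def luroth_map_def Let_def k_def[symmetric] using kd d by simp
  have y0: "y > 0"
  proof -
    have "1/x < real d" using kle kd d by simp
    then have "1 < real d * x" using x01 by (simp add: field_simps)
    then have "(real d - 1) < (real d - 1) * (real d * x)" using d by simp
    then show ?thesis unfolding yv by (simp add: algebra_simps)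
  qed
  have y1: "y \<le> 1"
  proof -
    have "real d - 1 \<le> 1/x" using kle kd d by simp
    then have "(real d - 1) * x \<le> 1" using x01 by (simp add: field_simps)
    then have "real d * ((real d - 1) * x) \<le> real d" using d by (simp add: mult_left_mono)
    then show ?thesis unfolding yv by (simp add: algebra_simps)
  qed
  have "x = phi d y" unfolding phi_def yv using d by (simp add: field_simps)
  moreover have "y \<in> cylinder w" unfolding cylinder_def y_def
    using y0 y1 rest by (auto simp: digit_Suc y_def)
  ultimately show "x \<in> phi d ` cylinder w" by blast
next
  fix x assume "x \<in> phi d ` cylinder w"
  then obtain y where x: "x = phi d y" and y: "y \<in> cylinder w" by blast
  then have y01: "0 < y" "y \<le> 1" unfolding cylinder_def by auto
  note pf = phi_floor[OF d y01]
  have "luroth_digit 0 x = d" unfolding digit0 x pf(1) using d by simp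
  moreover have "\<forall>j<length w. luroth_digit (Suc j) x = w ! j"
    using y unfolding cylinder_def digit_Suc x pf(4) by auto
  ultimately show "x \<in> cylinder (d # w)" unfolding cylinder_def using pf(2,3) x
    by (auto simp: less_Suc_eq_0_disj)
qed

fun lp :: "nat list \<Rightarrow> real" where
  "lp [] = 0"
| "lp (d # b) = 1 / real d + lp b / (real d * (real d - 1))"

definition ll :: "nat list \<Rightarrow> real" where
  "ll b = (\<Prod>j<length b. 1 / (real (b ! j) * (real (b ! j) - 1)))"

lemma ll_Nil[simp]: "ll [] = 1" by (simp add: ll_def)
lemma ll_Cons: "ll (d # b) = ll b / (real d * (real d - 1))"
  unfolding ll_def length_Cons prod.lessThan_Suc_shift by simp

lemma cyl_append:
  assumes "\<forall>x\<in>set b. x \<ge> 2"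
  shows "cylinder (b @ w) = (\<lambda>y. lp b + ll b * y) ` cylinder w"
  using assms
proof (induction b)
  case Nil then show ?case by simp
next
  case (Cons d b)
  have d: "d \<ge> 2" using Cons.prems by simp
  have "cylinder ((d # b) @ w) = phi d ` cylinder (b @ w)" using cyl_cons[OF d] by simp
  also have "\<dots> = phi d ` (\<lambda>y. lp b + ll b * y) ` cylinder w" using Cons by simp
  also have "\<dots> = (\<lambda>y. lp (d # b) + ll (d # b) * y) ` cylinder w"
    unfolding image_image by (rule image_cong) (auto simp: phi_def ll_Cons add_divide_distrib)
  finally show ?case .
qed

lemma cyl_Nil: "cylinder [] = {0<..1}" unfolding cylinder_def by auto

lemma cyl_single:
  assumes "c \<ge> 2" shows "cylinder [c] = {1/real c<..1/(real c - 1)}"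
proof -
  have "cylinder [c] = phi c ` {0<..1}" using cyl_cons[OF assms, of "[]"] cyl_Nil by simp
  also have "\<dots> = {1/real c<..1/(real c - 1)}"
  proof (intro set_eqI iffI)
    fix x assume "x \<in> phi c ` {0<..1}"
    then obtain y where xy: "x = phi c y" "0 < y" "y \<le> 1" by auto
    have cc: "real c * (real c - 1) > 0" using assms by simp
    have pd: "x = (real c - 1 + y) / (real c * (real c - 1))"
      unfolding xy phi_def using assms by (simp add: field_simps)
    have "1/real c = (real c - 1) / (real c * (real c - 1))" using assms by simp
    also have "\<dots> < (real c - 1 + y) / (real c * (real c - 1))"
      by (rule divide_strict_right_mono) (use xy cc in auto)
    also have "\<dots> = x" using pd by simp
    finally have a: "1/real c < x" .
    have "x \<le> real c / (real c * (real c - 1))" unfolding pd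
      by (rule divide_right_mono) (use xy cc in auto)
    also have "\<dots> = 1/(real c - 1)" using assms by simp
    finally show "x \<in> {1/real c<..1/(real c - 1)}" using a by simp
  next
    fix x assume x: "x \<in> {1/real c<..1/(real c - 1)}"
    define y where "y = (real c - 1) * real c * x - (real c - 1)"
    have xp: "x = phi c y" unfolding phi_def y_def using assms by (simp add: field_simps)
    have c1: "real c - 1 > 0" using assms by simp
    have "1 < real c * x" using x assms by (simp add: field_simps)
    then have h1: "(real c - 1) * 1 < (real c - 1) * (real c * x)"
      by (rule mult_strict_left_mono) (use c1 in auto)
    have "(real c - 1) * x \<le> 1" using x c1 by (simp add: field_simps)
    then have h2: "real c * ((real c - 1) * x) \<le> real c * 1"
      by (rule mult_left_mono) simp
    from h1 h2 have "0 < y" "y \<le> 1" unfolding y_def by (simp_all add: algebra_simps)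
    with xp show "x \<in> phi c ` {0<..1}" by auto
  qed
  finally show ?thesis .
qed



lemma ll_pos: "\<forall>x\<in>set b. x \<ge> 2 \<Longrightarrow> ll b > 0"
  unfolding ll_def
proof (rule prod_pos)
  fix j assume b: "\<forall>x\<in>set b. x \<ge> 2" and j: "j \<in> {..<length b}"
  then have "b ! j \<in> set b" by simp
  then have "b ! j \<ge> 2" using b by blast
  then show "0 < 1 / (real (b ! j) * (real (b ! j) - 1))" by simp
qed

lemma union_tail:
  assumes c0: "c0 \<ge> (2::nat)"
  shows "(\<Union>c\<in>{c. c \<ge> c0}. {1/real c<..1/(real c - 1)}) = {0<..1/(real c0 - 1)}"
proof (intro set_eqI iffI)
  fix y assume "y \<in> (\<Union>c\<in>{c. c \<ge> c0}. {1/real c<..1/(real c - 1)})"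
  then obtain c where c: "c \<ge> c0" "1/real c < y" "y \<le> 1/(real c - 1)" by auto
  have "0 < 1/real c" using c c0 by simp
  then have y0: "0 < y" using c(2) by linarith
  moreover have "1/(real c - 1) \<le> 1/(real c0 - 1)"
    using c c0 by (intro divide_left_mono) auto
  ultimately show "y \<in> {0<..1/(real c0 - 1)}" using c y0 by auto
next
  fix y assume y: "y \<in> {0<..1/(real c0 - 1)}"
  have c01: "real c0 - 1 > 0" using c0 by simp
  define k where "k = \<lfloor>1/y\<rfloor>"
  have yle: "real c0 - 1 \<le> 1/y" using y c01 by (simp add: field_simps)
  have k1: "k \<ge> int c0 - 1" unfolding k_def using yle by (simp add: le_floor_iff)
  have kl: "real_of_int k \<le> 1/y" "1/y < real_of_int k + 1" unfolding k_def by linarith+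
  define c where "c = nat (k + 1)"
  have cr: "real c = real_of_int k + 1" unfolding c_def using k1 c0 by simp
  have cge: "c \<ge> c0" unfolding c_def using k1 by simp
  have kpos: "real_of_int k > 0" using k1 c0 by simp
  have "1/real c < y" unfolding cr using kl y kpos by (simp add: field_simps)
  moreover have "y \<le> 1/(real c - 1)" unfolding cr using kl y kpos by (simp add: field_simps)
  ultimately show "y \<in> (\<Union>c\<in>{c. c \<ge> c0}. {1/real c<..1/(real c - 1)})" using cge by auto
qed

lemma affine_Ioc:
  fixes p l u :: real assumes "l > 0"
  shows "(\<lambda>y. p + l * y) ` {0<..u} = {p<..p + l * u}"
proof (intro set_eqI iffI)
  fix x assume "x \<in> (\<lambda>y. p + l * y) ` {0<..u}"
  then obtain y where yy: "y \<in> {0<..u}" "x = p + l*y" by blast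
  then have "x = p + l*y" "0 < y" "y \<le> u" by auto
  then show "x \<in> {p<..p + l * u}" using assms by (auto intro: mult_left_mono)
next
  fix x assume x: "x \<in> {p<..p + l * u}"
  define y where "y = (x - p) / l"
  have "x = p + l * y" unfolding y_def using assms by simp
  moreover have "0 < y" "y \<le> u" unfolding y_def using x assms by (auto simp: field_simps)
  ultimately show "x \<in> (\<lambda>y. p + l * y) ` {0<..u}" by auto
qed

lemma diam_K:
  assumes b: "\<forall>x\<in>set b. x \<ge> 2" and R: "Rn t b > 1"
  shows "diameter (Kn t b) = ll b / (real_of_int \<lceil>Rn t b\<rceil> - 1)"
    and "{c::nat. real c \<ge> Rn t b} = {c. c \<ge> nat \<lceil>Rn t b\<rceil>}"
    and "real_of_int \<lceil>Rn t b\<rceil> \<ge> 2"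
proof -
  define c0 where "c0 = nat \<lceil>Rn t b\<rceil>"
  have cint: "\<lceil>Rn t b\<rceil> \<ge> 2" using R by linarith
  then have c0r: "real c0 = real_of_int \<lceil>Rn t b\<rceil>" unfolding c0_def by simp
  have c02: "c0 \<ge> 2" unfolding c0_def using cint by linarith
  have S: "{c::nat. real c \<ge> Rn t b} = {c. c \<ge> c0}"
  proof (intro set_eqI iffI)
    fix c assume "c \<in> {c::nat. real c \<ge> Rn t b}"
    then have "\<lceil>Rn t b\<rceil> \<le> int c" using ceiling_le_iff[of "Rn t b" "int c"] by simp
    then show "c \<in> {c. c \<ge> c0}" unfolding c0_def by (simp only: mem_Collect_eq nat_le_iff)
  next
    fix c assume "c \<in> {c. c \<ge> c0}"
    then have "\<lceil>Rn t b\<rceil> \<le> int c" unfolding c0_def using cint by (simp add: ceiling_le_iff)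
    then have "real_of_int \<lceil>Rn t b\<rceil> \<le> real c" by (metis of_int_le_iff of_int_of_nat_eq)
    then show "c \<in> {c::nat. real c \<ge> Rn t b}" using le_of_int_ceiling[of "Rn t b"] by (simp del: ceiling_le_iff) linarith
  qed
  show "{c::nat. real c \<ge> Rn t b} = {c. c \<ge> nat \<lceil>Rn t b\<rceil>}" using S c0_def by simp
  show "real_of_int \<lceil>Rn t b\<rceil> \<ge> 2" using cint by simp
  have lp: "ll b > 0" by (rule ll_pos[OF b])
  have "(\<Union>c \<in> {c::nat. real c \<ge> Rn t b}. cylinder (b @ [c]))
      = (\<Union>c \<in> {c. c \<ge> c0}. (\<lambda>y. lp b + ll b * y) ` {1/real c<..1/(real c - 1)})"
    unfolding S using cyl_append[OF b] cyl_single c02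
    by (intro SUP_cong refl) (auto simp del: image_add_atLeastAtMost)
  also have "\<dots> = (\<lambda>y. lp b + ll b * y) ` (\<Union>c \<in> {c. c \<ge> c0}. {1/real c<..1/(real c - 1)})"
    by (simp add: image_UN)
  also have "\<dots> = {lp b<..lp b + ll b * (1/(real c0 - 1))}"
    unfolding union_tail[OF c02] by (rule affine_Ioc[OF lp])
  finally have "Kn t b = closure {lp b<..lp b + ll b * (1/(real c0 - 1))}"
    unfolding Kn_def by simp
  moreover have "ll b * (1/(real c0 - 1)) > 0" using lp c02 by simp
  ultimately show "diameter (Kn t b) = ll b / (real_of_int \<lceil>Rn t b\<rceil> - 1)"
    using c0r by simp
qed



definition PP :: "nat list \<Rightarrow> real" where
  "PP b = (\<Prod>j<length b. real (b ! j) * (real (b ! j) - 1))"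

lemma ll_PP: "ll b = 1 / PP b"
  unfolding ll_def PP_def by (simp add: prod_dividef)

lemma PP_ge: assumes b: "\<forall>x\<in>set b. x \<ge> 2" shows "PP b \<ge> 2 ^ length b"
proof -
  have "(\<Prod>j<length b. (2::real)) \<le> PP b" unfolding PP_def
  proof (rule prod_mono, clarify)
    fix j assume "j < length b"
    then have "b ! j \<ge> 2" using b nth_mem by blast
    then have "real (b!j) \<ge> 2" "real (b!j) - 1 \<ge> 1" by simp_all
    then have "2 * 1 \<le> real (b ! j) * (real (b ! j) - 1)" by (intro mult_mono) auto
    then show "0 \<le> (2::real) \<and> 2 \<le> real (b ! j) * (real (b ! j) - 1)" by simp
  qed
  then show ?thesis by simp
qed

lemma PP_append: "PP (b @ [c]) = PP b * (real c * (real c - 1))"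
  unfolding PP_def by (simp add: nth_append)

lemma ll_append: "ll (b @ [c]) = ll b / (real c * (real c - 1))"
  unfolding ll_PP PP_append by simp

lemma Qn_append: "Qn (b @ [c]) = real c * PP b"
  unfolding Qn_def PP_def by (simp add: nth_append)

lemma Qn_PP:
  assumes b: "\<forall>x\<in>set b. x \<ge> 2" and n: "b \<noteq> []"
  shows "PP b = Qn b * (real (last b) - 1)" and "Qn b \<ge> 2" and "Qn b \<le> PP b"
proof -
  obtain m where m: "length b = Suc m" using n by (cases b) auto
  have la: "last b = b ! m" using m n by (simp add: last_conv_nth)
  have lb: "last b \<ge> 2" using b n by simp
  show pq: "PP b = Qn b * (real (last b) - 1)"
    unfolding PP_def Qn_def m la by simp
  have "1 \<le> (\<Prod>j<m. real (b ! j) * (real (b ! j) - 1))"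
  proof (rule prod_ge_1, clarify)
    fix j assume "j < m"
    then have "b ! j \<ge> 2" using b nth_mem m by (metis less_SucI)
    then have "real (b!j) \<ge> 1" "real (b!j) - 1 \<ge> 1" by simp_all
    then show "1 \<le> real (b ! j) * (real (b ! j) - 1)" using mult_mono[of 1 "real (b!j)" 1 "real (b!j) - 1"] by simp
  qed
  then have "real (last b) * 1 \<le> Qn b" unfolding Qn_def m
    by (intro mult_left_mono) auto
  then show q2: "Qn b \<ge> 2" using lb by simp
  have "Qn b * 1 \<le> Qn b * (real (last b) - 1)" using lb q2 by (intro mult_left_mono) auto
  then show "Qn b \<le> PP b" using pq by simp
qed



lemma tele:
  fixes c \<sigma> :: real assumes s: "\<sigma> > 1" and c: "c \<ge> 2"
  shows "c powr (-\<sigma>) \<le> ((c-1) powr (1-\<sigma>) - c powr (1-\<sigma>)) / (\<sigma>-1)"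
proof -
  have "\<exists>z. c - 1 < z \<and> z < c \<and> (c powr (1-\<sigma>) - (c-1) powr (1-\<sigma>) = (c - (c-1)) * ((1-\<sigma>) * z powr (1-\<sigma>-1)))"
  proof (rule MVT2)
    fix x assume "c - 1 \<le> x" "x \<le> c"
    then have "x > 0" using c by simp
    then show "((\<lambda>a. a powr (1 - \<sigma>)) has_real_derivative (1 - \<sigma>) * x powr (1 - \<sigma> - 1)) (at x)"
      by (rule has_real_derivative_powr)
  qed simp
  then obtain z where z: "c - 1 < z" "z < c"
    and eq: "c powr (1-\<sigma>) - (c-1) powr (1-\<sigma>) = (1-\<sigma>) * z powr (-\<sigma>)" by auto
  have "c powr (-\<sigma>) \<le> z powr (-\<sigma>)" using z c s by (intro powr_mono2') auto
  then have "(\<sigma>-1) * c powr (-\<sigma>) \<le> (\<sigma>-1) * z powr (-\<sigma>)" using s by simp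
  also have "\<dots> = (c-1) powr (1-\<sigma>) - c powr (1-\<sigma>)" using eq by (simp add: algebra_simps)
  finally show ?thesis using s by (simp add: pos_le_divide_eq mult.commute)
qed

lemma tele_sum:
  fixes \<sigma> :: real assumes s: "\<sigma> > 1" and c0: "c0 \<ge> (2::nat)"
  shows "(\<Sum>c\<in>{c0..<c0+k}. real c powr (-\<sigma>)) \<le> ((real c0 - 1) powr (1-\<sigma>) - (real (c0 + k) - 1) powr (1-\<sigma>)) / (\<sigma>-1)"
proof (induction k)
  case 0 then show ?case by simp
next
  case (Suc k)
  have "(\<Sum>c\<in>{c0..<c0+Suc k}. real c powr (-\<sigma>)) = (\<Sum>c\<in>{c0..<c0+k}. real c powr (-\<sigma>)) + real (c0+k) powr (-\<sigma>)"
    by simp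
  also have "\<dots> \<le> ((real c0 - 1) powr (1-\<sigma>) - (real (c0 + k) - 1) powr (1-\<sigma>)) / (\<sigma>-1)
      + ((real (c0+k) - 1) powr (1-\<sigma>) - real (c0+k) powr (1-\<sigma>)) / (\<sigma>-1)"
    using Suc tele[OF s, of "real (c0+k)"] c0 by (intro add_mono) auto
  also have "\<dots> = ((real c0 - 1) powr (1-\<sigma>) - (real (c0 + Suc k) - 1) powr (1-\<sigma>)) / (\<sigma>-1)"
    by (simp add: diff_divide_distrib)
  finally show ?case .
qed

lemma tele_bound:
  fixes \<sigma> :: real assumes s: "\<sigma> > 1" and c0: "c0 \<ge> (2::nat)"
    and F: "finite F" "F \<subseteq> {c0..}"
  shows "(\<Sum>c\<in>F. real c powr (-\<sigma>)) \<le> (real c0 - 1) powr (1-\<sigma>) / (\<sigma>-1)"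
proof -
  define k where "k = Suc (Max (insert 0 F))"
  have sub: "F \<subseteq> {c0..<c0+k}"
  proof
    fix x assume x: "x \<in> F"
    have m: "x \<le> Max (insert 0 F)" using F x by simp
    have "c0 \<le> x" using x F by auto
    moreover have "x < c0 + k" using m unfolding k_def by linarith
    ultimately show "x \<in> {c0..<c0+k}" by simp
  qed
  have "(\<Sum>c\<in>F. real c powr (-\<sigma>)) \<le> (\<Sum>c\<in>{c0..<c0+k}. real c powr (-\<sigma>))"
    by (rule sum_mono2[OF _ sub]) auto
  also have "\<dots> \<le> ((real c0 - 1) powr (1-\<sigma>) - (real (c0 + k) - 1) powr (1-\<sigma>)) / (\<sigma>-1)"
    by (rule tele_sum[OF s c0])
  also have "\<dots> \<le> (real c0 - 1) powr (1-\<sigma>) / (\<sigma>-1)"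
    using s by (intro divide_right_mono) auto
  finally show ?thesis .
qed



lemma key_ineq:
  fixes t s \<sigma> P M0 x R :: real
  assumes t: "t > 0" and s: "s > 0" and sig: "\<sigma> = s * (2 + 1/t)" "\<sigma> > 1"
    and P: "P \<ge> 1" and M0: "M0 = 4 powr s / (\<sigma> - 1)"
    and C2: "M0 \<le> P powr (min s (\<sigma> - 1) / t)"
    and x: "x \<ge> 1" "x \<le> R" and R: "R \<le> P powr (1/t)"
  shows "4 powr s * P powr (-(s + s/t)) * x powr (1-\<sigma>) / (\<sigma>-1) \<le> (1/(P*x)) powr s"
proof -
  define \<gamma> where "\<gamma> = \<sigma> - 1 - s"
  have Ppos: "P > 0" using P by simp
  have xpos: "x > 0" using x by simp
  have M0pos: "M0 > 0" unfolding M0 using sig by simp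
  have main: "M0 * P powr (-(s/t)) \<le> x powr \<gamma>"
  proof (cases "\<gamma> \<ge> 0")
    case True
    have "M0 \<le> P powr (s/t)"
      using C2 powr_mono[of "min s (\<sigma> - 1) / t" "s/t" P] P t
      by (smt (verit) divide_right_mono min.cobounded1)
    then have "M0 * P powr (-(s/t)) \<le> P powr (s/t) * P powr (-(s/t))"
      by (intro mult_right_mono) auto
    also have "\<dots> = 1" using Ppos by (simp add: powr_add[symmetric])
    also have "\<dots> \<le> x powr \<gamma>" using True x by (intro ge_one_powr_ge_zero) auto
    finally show ?thesis .
  next
    case False
    have "M0 \<le> P powr ((\<sigma>-1)/t)"
      using C2 powr_mono[of "min s (\<sigma> - 1) / t" "(\<sigma>-1)/t" P] P t
      by (smt (verit) divide_right_mono min.cobounded2)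
    then have "M0 * P powr (-(s/t)) \<le> P powr ((\<sigma>-1)/t) * P powr (-(s/t))"
      by (intro mult_right_mono) auto
    also have "\<dots> = P powr (\<gamma>/t)" using Ppos unfolding \<gamma>_def
      by (simp add: powr_add[symmetric] diff_divide_distrib)
    also have "\<dots> = (P powr (1/t)) powr \<gamma>" by (simp add: powr_powr)
    also have "\<dots> \<le> x powr \<gamma>"
      using False x R by (intro powr_mono2') auto
    finally show ?thesis .
  qed
  have "4 powr s * P powr (-(s + s/t)) * x powr (1-\<sigma>) / (\<sigma>-1)
      = (M0 * P powr (-(s/t))) * (P powr (-s) * x powr (-s) * x powr (-\<gamma>))"
    unfolding M0 \<gamma>_def using Ppos xpos
    by (simp add: powr_add[symmetric] algebra_simps)
  also have "\<dots> \<le> x powr \<gamma> * (P powr (-s) * x powr (-s) * x powr (-\<gamma>))"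
    using main by (intro mult_right_mono) auto
  also have "\<dots> = P powr (-s) * x powr (-s)"
    using xpos by (simp add: powr_add[symmetric] algebra_simps)
  also have "\<dots> = (1/(P*x)) powr s"
    using Ppos xpos by (simp add: powr_minus powr_mult powr_divide field_simps)
  finally show ?thesis .
qed



lemma term_bound:
  fixes t s P R' c :: real
  assumes t: "t > 0" and s: "s > 0" and P: "P > 0" and c: "c \<ge> 2"
    and R': "R' = (c * P) powr (1/t)" "R' \<ge> 2"
    and cr: "cr \<ge> R'"
  shows "((1/P) / (c * (c - 1)) / (cr - 1)) powr s \<le> 4 powr s * P powr (-(s + s/t)) * c powr (-(s * (2 + 1/t)))"
proof -
  have h1: "cr - 1 \<ge> R'/2" using cr R' by simp
  have h2: "c * (c - 1) \<ge> c^2/2" using c by (simp add: power2_eq_square field_simps)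
  have pos1: "c^2/2 > 0" "R'/2 > 0" using c R' by auto
  have "(1/P) / (c * (c - 1)) / (cr - 1) = 1 / (P * (c * (c-1)) * (cr - 1))" by simp
  also have "\<dots> \<le> 1 / (P * (c^2/2) * (R'/2))"
    using h1 h2 pos1 P c by (intro divide_left_mono mult_mono mult_pos_pos) auto
  also have "\<dots> = 4 / (P * c^2 * R')" by simp
  finally have le: "(1/P) / (c * (c - 1)) / (cr - 1) \<le> 4 / (P * c^2 * R')" .
  have nn: "0 \<le> (1/P) / (c * (c - 1)) / (cr - 1)" using P c h1 R' by auto
  have "((1/P) / (c * (c - 1)) / (cr - 1)) powr s \<le> (4 / (P * c^2 * R')) powr s"
    using le nn s by (intro powr_mono2) auto
  also have "\<dots> = 4 powr s * P powr (-(s + s/t)) * c powr (-(s * (2 + 1/t)))"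
  proof -
    have cp: "c > 0" using c by simp
    have Rp: "R' > 0" using R'(2) by linarith
    have e1: "(4 / (P * c^2 * R')) powr s = 4 powr s / (P powr s * (c^2) powr s * R' powr s)"
      using cp P Rp by (simp only: powr_divide powr_mult)
    have "c^2 = c powr 2" using cp by (simp add: powr_numeral)
    then have e2: "(c^2) powr s = c powr (2 * s)" by (simp add: powr_powr)
    have "R' powr s = ((c*P) powr (1/t)) powr s" using R'(1) by simp
    also have "\<dots> = (c*P) powr (s/t)" by (simp add: powr_powr)
    also have "\<dots> = c powr (s/t) * P powr (s/t)" using cp P by (simp add: powr_mult)
    finally have e3: "R' powr s = c powr (s/t) * P powr (s/t)" .
    have e4: "P powr s * P powr (s/t) = P powr (s + s/t)" by (simp add: powr_add)
    have ee: "s * (2 + 1/t) = 2 * s + s/t" by (simp add: algebra_simps)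
    have e5: "c powr (2 * s) * c powr (s/t) = c powr (s * (2 + 1/t))"
      unfolding ee by (simp only: powr_add)
    have "(4 / (P * c^2 * R')) powr s = 4 powr s / ((P powr s * P powr (s/t)) * (c powr (2 * s) * c powr (s/t)))"
      unfolding e1 e2 e3 by (simp only: ac_simps)
    also have "\<dots> = 4 powr s / (P powr (s + s/t) * c powr (s * (2 + 1/t)))"
      unfolding e4 e5 ..
    also have "\<dots> = 4 powr s * P powr (-(s + s/t)) * c powr (-(s * (2 + 1/t)))"
      by (simp only: powr_minus divide_inverse inverse_mult_distrib ac_simps)
    finally show ?thesis .
  qed
  finally show ?thesis .
qed



lemma per_b:
  fixes t s \<sigma> :: real
  assumes t: "t > 0" and s: "s > 0" and sig: "\<sigma> = s * (2 + 1/t)" "\<sigma> > 1"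
    and b: "\<forall>x\<in>set b. x \<ge> 2" and bn: "b \<noteq> []"
    and C1: "PP b \<ge> 2 powr t"
    and C2: "4 powr s / (\<sigma> - 1) \<le> PP b powr (min s (\<sigma> - 1) / t)"
  shows "(\<lambda>c. diameter (Kn t (b @ [c])) powr s) summable_on {c::nat. real c \<ge> Rn t b}
      \<and> (\<Sum>\<^sub>\<infinity>c \<in> {c::nat. real c \<ge> Rn t b}. diameter (Kn t (b @ [c])) powr s)
          \<le> diameter (Kn t b) powr s"
proof -
  define P where "P = PP b"
  have "(2::real)^1 \<le> 2^length b" by (rule power_increasing) (use bn in \<open>auto simp: Suc_le_eq\<close>)
  then have P2: "P \<ge> 2" unfolding P_def using PP_ge[OF b] by simp
  have Ppos: "P > 0" using P2 by simp
  have llP: "ll b = 1/P" unfolding P_def ll_PP ..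
  note QP = Qn_PP[OF b bn]
  define R where "R = Rn t b"
  have Rdef: "R = Qn b powr (1/t)" unfolding R_def Rn_def ..
  have R1: "R > 1"
  proof -
    have "1 powr (1/t) < Qn b powr (1/t)" using QP(2) t by (intro powr_less_mono2) auto
    then show ?thesis unfolding Rdef by simp
  qed
  have RP: "R \<le> P powr (1/t)" unfolding Rdef P_def using QP t by (intro powr_mono2) auto
  note DK = diam_K[OF b, of t, folded R_def, OF R1]
  define c0 where "c0 = nat \<lceil>R\<rceil>"
  have c0r: "real c0 = real_of_int \<lceil>R\<rceil>" unfolding c0_def using DK(3) by simp
  have c02: "c0 \<ge> 2" using DK(3) c0r by linarith
  have c0R: "real c0 - 1 \<le> R" using c0r of_int_ceiling_le_add_one[of R] by linarith
  have S: "{c::nat. real c \<ge> R} = {c0..}" using DK(2) unfolding c0_def by auto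
  have D: "diameter (Kn t b) = 1 / (P * (real c0 - 1))" using DK(1) c0r llP by simp
  define A where "A = 4 powr s * P powr (-(s + s/t))"
  have P2t: "P powr (1/t) \<ge> 2"
  proof -
    have "(2 powr t) powr (1/t) \<le> P powr (1/t)" using C1 t unfolding P_def by (intro powr_mono2) auto
    then show ?thesis using t by (simp add: powr_powr)
  qed
  have tb: "diameter (Kn t (b @ [c])) powr s \<le> A * real c powr (-\<sigma>)" if c: "c \<ge> c0" for c
  proof -
    have c2: "c \<ge> 2" using c c02 by simp
    have bc: "\<forall>x\<in>set (b @ [c]). x \<ge> 2" using b c2 by auto
    define R' where "R' = Rn t (b @ [c])"
    have R'd: "R' = (real c * P) powr (1/t)" unfolding R'_def Rn_def Qn_append P_def ..
    have "P powr (1/t) \<le> (real c * P) powr (1/t)"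
      using c2 Ppos t by (intro powr_mono2) (auto intro: order_trans[of _ "1 * P"])
    then have R'2: "R' \<ge> 2" using P2t R'd by simp
    note DK' = diam_K[OF bc, of t, folded R'_def]
    have "diameter (Kn t (b @ [c])) = (1/P) / (real c * (real c - 1)) / (real_of_int \<lceil>R'\<rceil> - 1)"
      using DK'(1) R'2 ll_append llP by simp
    then have "diameter (Kn t (b @ [c])) powr s
        \<le> 4 powr s * P powr (-(s + s/t)) * real c powr (-(s * (2 + 1/t)))"
      using term_bound[OF t s Ppos _ R'd R'2, of "real_of_int \<lceil>R'\<rceil>"] c2 by simp
    then show ?thesis unfolding A_def sig(1) .
  qed
  have nn: "\<And>c. 0 \<le> diameter (Kn t (b @ [c])) powr s" by simp
  have fin: "sum (\<lambda>c. diameter (Kn t (b @ [c])) powr s) F \<le> diameter (Kn t b) powr s"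
    if F: "finite F" "F \<subseteq> {c::nat. real c \<ge> R}" for F
  proof -
    have F': "F \<subseteq> {c0..}" using F S by simp
    have "sum (\<lambda>c. diameter (Kn t (b @ [c])) powr s) F \<le> (\<Sum>c\<in>F. A * real c powr (-\<sigma>))"
      using F' tb by (intro sum_mono) auto
    also have "\<dots> = A * (\<Sum>c\<in>F. real c powr (-\<sigma>))" by (simp add: sum_distrib_left)
    also have "\<dots> \<le> A * ((real c0 - 1) powr (1-\<sigma>) / (\<sigma>-1))"
      using tele_bound[OF sig(2) c02 F(1) F'] unfolding A_def by (intro mult_left_mono) auto
    also have "\<dots> = 4 powr s * P powr (-(s + s/t)) * (real c0 - 1) powr (1-\<sigma>) / (\<sigma>-1)"
      unfolding A_def by simp
    also have "\<dots> \<le> (1/(P*(real c0 - 1))) powr s"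
      by (rule key_ineq[OF t s sig _ refl _ _ c0R RP]) (use P2 C2 c02 P_def in auto)
    also have "\<dots> = diameter (Kn t b) powr s" using D by simp
    finally show ?thesis .
  qed
  have summ: "(\<lambda>c. diameter (Kn t (b @ [c])) powr s) summable_on {c::nat. real c \<ge> R}"
    by (rule nonneg_bdd_above_summable_on) (use nn fin in \<open>auto intro!: bdd_aboveI\<close>)
  have "(\<Sum>\<^sub>\<infinity>c \<in> {c::nat. real c \<ge> R}. diameter (Kn t (b @ [c])) powr s) \<le> diameter (Kn t b) powr s"
    by (rule infsum_le_finite_sums[OF summ fin])
  with summ show ?thesis unfolding R_def by simp
qed



theorem mainTheorem7:
  fixes \<alpha> \<epsilon> \<delta>\<^sub>1 :: real
  assumes "\<alpha> > 0" and "\<epsilon> > 0"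
    and "0 < \<delta>\<^sub>1" and "\<delta>\<^sub>1 < 1 / (2 + 1 / (\<alpha> + \<epsilon>))"
  shows "\<exists>N::nat. \<forall>n \<ge> N. \<forall>b :: nat list. length b = n \<and> (\<forall>x \<in> set b. x \<ge> 2) \<longrightarrow>
    (let s = (\<alpha> + \<epsilon>) / (2 * (\<alpha> + \<epsilon>) + 1) + \<delta>\<^sub>1 in
      (\<lambda>c. diameter (Kn (\<alpha> + \<epsilon>) (b @ [c])) powr s) summable_on {c::nat. real c \<ge> Rn (\<alpha> + \<epsilon>) b}
      \<and> (\<Sum>\<^sub>\<infinity>c \<in> {c::nat. real c \<ge> Rn (\<alpha> + \<epsilon>) b}. diameter (Kn (\<alpha> + \<epsilon>) (b @ [c])) powr s)
          \<le> diameter (Kn (\<alpha> + \<epsilon>) b) powr s)"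
proof -
  define t where "t = \<alpha> + \<epsilon>"
  define s where "s = t / (2 * t + 1) + \<delta>\<^sub>1"
  define \<sigma> where "\<sigma> = s * (2 + 1/t)"
  have t: "t > 0" unfolding t_def using assms by simp
  have "t / (2 * t + 1) > 0" using t by simp
  then have s: "s > 0" unfolding s_def using assms(3) by linarith
  have e: "2 + 1/t = (2*t+1)/t" using t by (simp add: field_simps)
  have t1: "2*t+1 > 0" using t by simp
  have "\<sigma> = t / (2 * t + 1) * ((2 * t + 1) / t) + \<delta>\<^sub>1 * (2 + 1/t)"
    unfolding \<sigma>_def s_def e by (simp only: distrib_right)
  also have "t / (2 * t + 1) * ((2 * t + 1) / t) = 1" using t t1 by simp
  finally have "\<sigma> = 1 + \<delta>\<^sub>1 * (2 + 1/t)" .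
  moreover have "1/t > 0" using t by simp
  then have "2 + 1/t > 0" by linarith
  then have "\<delta>\<^sub>1 * (2 + 1/t) > 0" using assms(3) mult_pos_pos by blast
  ultimately have sig1: "\<sigma> > 1" by simp
  define m where "m = min s (\<sigma> - 1) / t"
  have m: "m > 0" unfolding m_def using s sig1 t by simp
  define M0 where "M0 = 4 powr s / (\<sigma> - 1)"
  have M0: "M0 > 0" unfolding M0_def using sig1 by simp
  define Z where "Z = max (2 powr t) (M0 powr (1/m))"
  obtain N0 :: nat where N0: "Z \<le> real N0" using real_arch_simple by blast
  define N where "N = max 1 N0"
  have "\<forall>n \<ge> N. \<forall>b :: nat list. length b = n \<and> (\<forall>x \<in> set b. x \<ge> 2) \<longrightarrow>
      (\<lambda>c. diameter (Kn t (b @ [c])) powr s) summable_on {c::nat. real c \<ge> Rn t b}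
      \<and> (\<Sum>\<^sub>\<infinity>c \<in> {c::nat. real c \<ge> Rn t b}. diameter (Kn t (b @ [c])) powr s)
          \<le> diameter (Kn t b) powr s"
  proof (intro allI impI)
    fix n :: nat and b :: "nat list" assume n: "n \<ge> N" and bb: "length b = n \<and> (\<forall>x \<in> set b. x \<ge> 2)"
    have b: "\<forall>x \<in> set b. x \<ge> 2" using bb by simp
    have bn: "b \<noteq> []" using bb n unfolding N_def by auto
    have "Z \<le> real N0" by (fact N0)
    also have "\<dots> \<le> real n" using n unfolding N_def by simp
    also have "\<dots> \<le> 2 ^ n"
    proof -
      have "n < 2 ^ n" by (rule less_exp)
      then have "real n \<le> real (2 ^ n)" by linarith
      then show ?thesis by simp
    qed
    also have "\<dots> \<le> PP b" using PP_ge[OF b] bb by simp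
    finally have ZP: "Z \<le> PP b" .
    have C1: "PP b \<ge> 2 powr t" using ZP unfolding Z_def by simp
    have "M0 powr (1/m) \<le> PP b" using ZP unfolding Z_def by simp
    then have "(M0 powr (1/m)) powr m \<le> PP b powr m" using m by (intro powr_mono2) auto
    then have C2: "M0 \<le> PP b powr m" using m M0 by (simp add: powr_powr)
    show "(\<lambda>c. diameter (Kn t (b @ [c])) powr s) summable_on {c::nat. real c \<ge> Rn t b}
      \<and> (\<Sum>\<^sub>\<infinity>c \<in> {c::nat. real c \<ge> Rn t b}. diameter (Kn t (b @ [c])) powr s)
          \<le> diameter (Kn t b) powr s"
      by (rule per_b[OF t s \<sigma>_def sig1 b bn C1]) (use C2 in \<open>simp add: M0_def m_def\<close>)
  qed
  then show ?thesis unfolding t_def s_def Let_def by blast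
qed

end
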